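(* Let $x,y$ be two distinct points of the unit disk $\mathbb{B}^2=\{z\in\mathbb{C}:|z|<1\}$. Then the hyperbolic midpoint of the hyperbolic geodesic segment joining $x$ and $y$ is constructible by ruler and compass from the points $0,1,x,y$.
   Context: The hyperbolic distance $\rho$ on $\mathbb{B}^2$ is given by $\sinh\frac{\rho(x,y)}{2}=\frac{|x-y|}{\sqrt{1-|x|^2}\sqrt{1-|y|^2}}$. The hyperbolic geodesic segment $J[x,y]$ is the arc joining $x$ and $y$ of the circle orthogonal to the unit circle $S^1$ (or of the diameter, if $0,x,y$ are collinear) containing $x,y$; its hyperbolic midpoint is the unique $z\in J[x,y]$ with $\rho(x,z)=\rho(z,y)$. A point is constructible by ruler and compass from a finite set $S\subset\mathbb{C}$ if it belongs to the smallest set $C\supseteq S$ closed under adding intersection points of lines through two distinct points of $C$ and circles with centre in $C$ passing through a point of $C$ (so the unit circle, centred at $0$ through $1$, is available). *)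

theory Defs
  imports "HOL-Analysis.Analysis"
begin

definition hdist :: "complex \<Rightarrow> complex \<Rightarrow> real" where
  "hdist x y = 2 * arsinh (cmod (x - y) / (sqrt (1 - (cmod x)\<^sup>2) * sqrt (1 - (cmod y)\<^sup>2)))"

text \<open>Hyperbolic geodesic segment J[x,y]: the segment of the diameter if 0, x, y are
  collinear; otherwise the arc joining x and y (lying in the disk) of the circle
  (centre c, radius r) orthogonal to the unit circle, i.e. |c|^2 = 1 + r^2, through x and y.\<close>
definition hgeod :: "complex \<Rightarrow> complex \<Rightarrow> complex set" where
  "hgeod x y =
    (if Im (x * cnj y) = 0 then closed_segment x y
     else {z. \<exists>c r a b. r > 0 \<and> (cmod c)\<^sup>2 = 1 + r\<^sup>2 \<and>
                x = c + of_real r * cis a \<and> y = c + of_real r * cis b \<and>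
                (\<forall>t\<in>closed_segment a b. cmod (c + of_real r * cis t) < 1) \<and>
                (\<exists>t\<in>closed_segment a b. z = c + of_real r * cis t)})"

definition hmidpoint :: "complex \<Rightarrow> complex \<Rightarrow> complex" where
  "hmidpoint x y = (THE z. z \<in> hgeod x y \<and> hdist x z = hdist z y)"

definition line_through :: "complex \<Rightarrow> complex \<Rightarrow> complex set" where
  "line_through a b = {z. \<exists>t::real. z = a + of_real t * (b - a)}"

definition circle_through :: "complex \<Rightarrow> complex \<Rightarrow> complex set" where
  "circle_through c d = {z. cmod (z - c) = cmod (d - c)}"

text \<open>Points constructible by ruler and compass from S: smallest superset of S closed under
  intersections of lines (through two distinct points) and circles (centre in the set, through
  a point of the set); distinct curves only, so the intersections are finite.\<close>
inductive_set constructible :: "complex set \<Rightarrow> complex set" for S :: "complex set" where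
  base: "z \<in> S \<Longrightarrow> z \<in> constructible S"
| line_line: "\<lbrakk>a \<in> constructible S; b \<in> constructible S; c \<in> constructible S;
     d \<in> constructible S; a \<noteq> b; c \<noteq> d; line_through a b \<noteq> line_through c d;
     z \<in> line_through a b; z \<in> line_through c d\<rbrakk> \<Longrightarrow> z \<in> constructible S"
| line_circle: "\<lbrakk>a \<in> constructible S; b \<in> constructible S; c \<in> constructible S;
     d \<in> constructible S; a \<noteq> b;
     z \<in> line_through a b; z \<in> circle_through c d\<rbrakk> \<Longrightarrow> z \<in> constructible S"
| circle_circle: "\<lbrakk>a \<in> constructible S; b \<in> constructible S; c \<in> constructible S;
     d \<in> constructible S; circle_through a b \<noteq> circle_through c d;
     z \<in> circle_through a b; z \<in> circle_through c d\<rbrakk> \<Longrightarrow> z \<in> constructible S"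

end

theory Submission
  imports Defs
begin


abbreviation "\<omega> \<equiv> Complex (1/2) (sqrt 3 / 2)"

lemma cmod_omega: "cmod \<omega> = 1" "cmod (\<omega> - 1) = 1"
  by (simp_all add: cmod_def power_divide)

lemma C_refl:
  assumes "a \<in> constructible S" "b \<in> constructible S"
  shows "2*a - b \<in> constructible S"
proof (cases "a = b")
  case True thus ?thesis using assms by simp
next
  case False
  show ?thesis
  proof (rule constructible.line_circle[of b S a a b])
    show "2 * a - b \<in> line_through b a" unfolding line_through_def
      by (rule CollectI, rule exI[of _ 2]) simp
    show "2 * a - b \<in> circle_through a b" unfolding circle_through_def
      by (simp add: norm_minus_commute)
  qed (use assms False in auto)
qed

lemma C_rot:
  assumes "a \<in> constructible S" "b \<in> constructible S"
  shows "a + (b - a) * \<omega> \<in> constructible S" "a + (b - a) * cnj \<omega> \<in> constructible S"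
proof -
  have ok: "a + (b - a) * w \<in> constructible S" if w: "cmod w = 1" "cmod (w - 1) = 1" for w
  proof (cases "a = b")
    case True thus ?thesis using assms by simp
  next
    case False
    have ne: "circle_through a b \<noteq> circle_through b a"
    proof
      assume "circle_through a b = circle_through b a"
      moreover have "2*a - b \<in> circle_through a b" unfolding circle_through_def
        by (simp add: norm_minus_commute)
      ultimately have "cmod (2*a - b - b) = cmod (a - b)" unfolding circle_through_def by auto
      moreover have "2*a - b - b = 2 * (a - b)" by simp
      ultimately have "cmod (2 * (a - b)) = cmod (a-b)" by simp
      moreover have "cmod (2 * (a - b)) = 2 * cmod (a-b)" by (simp only: norm_mult) simp
      ultimately have "2 * cmod (a - b) = cmod (a-b)" by simp
      thus False using False by simp
    qed
    show ?thesis
    proof (rule constructible.circle_circle[of a S b b a])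
      show "a + (b - a) * w \<in> circle_through a b" unfolding circle_through_def
        using w by (simp add: norm_mult)
      have "a + (b - a) * w - b = (b - a) * (w - 1)" by (simp add: algebra_simps)
      thus "a + (b - a) * w \<in> circle_through b a" unfolding circle_through_def
        using w by (simp add: norm_mult norm_minus_commute)
    qed (rule assms ne)+
  qed
  show "a + (b - a) * \<omega> \<in> constructible S" by (rule ok) (simp_all add: cmod_def power_divide)
  show "a + (b - a) * cnj \<omega> \<in> constructible S" by (rule ok) (simp_all add: cmod_def power_divide)
qed

lemma C_mid:
  assumes "a \<in> constructible S" "b \<in> constructible S"
  shows "(a + b) / 2 \<in> constructible S"
proof (cases "a = b")
  case True thus ?thesis using assms by simp
next
  case False
  define P where "P = a + (b - a) * \<omega>"
  define Q where "Q = a + (b - a) * cnj \<omega>"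
  have PQ: "P \<in> constructible S" "Q \<in> constructible S" using C_rot[OF assms] P_def Q_def by auto
  have PQne: "P \<noteq> Q" using False unfolding P_def Q_def by (auto simp: complex_eq_iff)
  have Pnot: "P \<notin> line_through a b"
  proof
    assume "P \<in> line_through a b"
    then obtain t where "P = a + of_real t * (b - a)" unfolding line_through_def by auto
    hence "(b - a) * \<omega> = (b - a) * of_real t" unfolding P_def by (simp add: algebra_simps)
    hence "\<omega> = of_real t" using False by simp
    thus False by (simp add: complex_eq_iff)
  qed
  have Pin: "P \<in> line_through P Q" unfolding line_through_def by (auto intro: exI[of _ 0])
  show ?thesis
  proof (rule constructible.line_line[of a S b P Q])
    show "line_through a b \<noteq> line_through P Q" using Pnot Pin by auto
    show "(a + b) / 2 \<in> line_through a b" unfolding line_through_def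
      by (rule CollectI, rule exI[of _ "1/2"]) (simp add: field_simps)
    have "(a + b) / 2 = P + of_real (1/2) * (Q - P)" unfolding P_def Q_def
      by (simp add: complex_eq_iff field_simps)
    thus "(a + b) / 2 \<in> line_through P Q" unfolding line_through_def by blast
  qed (rule assms PQ PQne False)+
qed

lemma C_add:
  assumes "0 \<in> S" "a \<in> constructible S" "b \<in> constructible S"
  shows "a + b \<in> constructible S"
proof -
  have "2 * ((a + b)/2) - 0 \<in> constructible S"
    by (rule C_refl[OF C_mid[OF assms(2,3)]]) (rule constructible.base[OF assms(1)])
  moreover have "2 * ((a + b)/2) - 0 = a + b" by simp
  ultimately show ?thesis by (simp only:)
qed

lemma C_uminus:
  assumes "0 \<in> S" "a \<in> constructible S"
  shows "- a \<in> constructible S"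
  using C_refl[OF constructible.base[OF assms(1)] assms(2)] by simp

lemma C_diff:
  assumes "0 \<in> S" "a \<in> constructible S" "b \<in> constructible S"
  shows "a - b \<in> constructible S"
  using C_add[OF assms(1,2) C_uminus[OF assms(1,3)]] by simp

lemma cnj_aux: "cmod (of_real (cmod a) - 1) = cmod (a - 1) \<Longrightarrow> Im a = 0"
proof -
  assume h: "cmod (of_real (cmod a) - 1) = cmod (a - 1)"
  have "cmod (of_real (cmod a) - 1) = \<bar>cmod a - 1\<bar>"
    by (metis norm_of_real of_real_1 of_real_diff)
  with h have "\<bar>cmod a - 1\<bar> = cmod (a - 1)" by simp
  hence "(cmod a - 1)^2 = (cmod (a - 1))^2" by (metis power2_abs)
  also have "\<dots> = (Re a - 1)^2 + (Im a)^2" by (simp add: cmod_power2)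
  finally have "(cmod a)^2 - 2 * cmod a + 1 = (Re a)^2 - 2 * Re a + 1 + (Im a)^2"
    by (simp add: power2_eq_square algebra_simps)
  hence "cmod a = Re a" by (simp add: cmod_power2)
  hence "(cmod a)^2 = (Re a)^2" by simp
  thus "Im a = 0" by (simp add: cmod_power2)
qed
lemma cnj_aux2: "cmod (cnj a - 1) = cmod (a - 1)"
proof -
  have "cnj a - 1 = cnj (a - 1)" by simp
  thus ?thesis by (simp only: complex_mod_cnj)
qed

lemma C_cnj:
  assumes "0 \<in> S" "1 \<in> S" "a \<in> constructible S"
  shows "cnj a \<in> constructible S"
proof (cases "Im a = 0")
  case True
  hence "cnj a = a" by (simp add: complex_eq_iff)
  thus ?thesis using assms by simp
next
  case False
  have ne: "circle_through 0 a \<noteq> circle_through 1 a"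
  proof
    assume eq: "circle_through 0 a = circle_through 1 a"
    have "of_real (cmod a) \<in> circle_through 0 a" unfolding circle_through_def by simp
    hence "of_real (cmod a) \<in> circle_through 1 a" by (simp only: eq)
    hence "cmod (of_real (cmod a) - 1) = cmod (a - 1)" unfolding circle_through_def by simp
    from cnj_aux[OF this] show False using False by simp
  qed
  show ?thesis
  proof (rule constructible.circle_circle[of 0 S a 1 a])
    show "cnj a \<in> circle_through 0 a" unfolding circle_through_def by simp
    have "cmod (cnj a - 1) = cmod (a - 1)" by (rule cnj_aux2)
    thus "cnj a \<in> circle_through 1 a" unfolding circle_through_def by simp
  qed (fact constructible.base[OF assms(1)] constructible.base[OF assms(2)] assms(3) ne)+
qed

lemma ne_0_ii: "(0::complex) \<noteq> \<i>" by (simp add: complex_eq_iff)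
lemma ne_0_1: "(0::complex) \<noteq> 1" by simp

lemma C_one: "1 \<in> S \<Longrightarrow> 1 \<in> constructible S" by (rule constructible.base)
lemma C_zero: "0 \<in> S \<Longrightarrow> 0 \<in> constructible S" by (rule constructible.base)

lemma C_ii:
  assumes "0 \<in> S" "1 \<in> S"
  shows "\<i> \<in> constructible S"
proof -
  have m1: "-1 \<in> constructible S" by (rule C_uminus[OF assms(1) C_one[OF assms(2)]])
  have P: "-1 + (1 - -1) * \<omega> \<in> constructible S" "-1 + (1 - -1) * cnj \<omega> \<in> constructible S"
    using C_rot[OF m1 C_one[OF assms(2)]] by auto
  define P where "P = -1 + (1 - -1) * \<omega>"
  define Q where "Q = -1 + (1 - -1) * cnj \<omega>"
  have P': "P = Complex 0 (sqrt 3)" "Q = Complex 0 (- sqrt 3)" unfolding P_def Q_def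
    by (simp_all add: complex_eq_iff)
  show ?thesis
  proof (rule constructible.line_circle[of P S Q 0 1])
    show "P \<in> constructible S" "Q \<in> constructible S" using P P_def Q_def by auto
    show "0 \<in> constructible S" "1 \<in> constructible S" using assms by (auto intro: constructible.base)
    show "P \<noteq> Q" unfolding P' by simp
    have "\<i> = P + of_real ((sqrt 3 - 1) / (2 * sqrt 3)) * (Q - P)" unfolding P'
      by (simp add: complex_eq_iff field_simps)
    thus "\<i> \<in> line_through P Q" unfolding line_through_def by blast
    show "\<i> \<in> circle_through 0 1" unfolding circle_through_def by simp
  qed
qed

lemma C_ireal:
  assumes "0 \<in> S" "1 \<in> S" "of_real r \<in> constructible S"
  shows "\<i> * of_real r \<in> constructible S"
proof (rule constructible.line_circle[of 0 S \<i> 0 "of_real r"])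
  show "\<i> * of_real r \<in> line_through 0 \<i>" unfolding line_through_def
    by (rule CollectI, rule exI[of _ r]) simp
  show "\<i> * of_real r \<in> circle_through 0 (of_real r)" unfolding circle_through_def
    by (simp add: norm_mult)
qed (rule assms C_zero C_ii ne_0_ii ne_0_1)+

lemma C_Im0:
  assumes "0 \<in> S" "1 \<in> S" "a \<in> constructible S" "Re a = 0"
  shows "of_real (Im a) \<in> constructible S"
proof (rule constructible.line_circle[of 0 S 1 0 a])
  show "of_real (Im a) \<in> line_through 0 1" unfolding line_through_def
    by (rule CollectI, rule exI[of _ "Im a"]) simp
  have "cmod a = \<bar>Im a\<bar>" using assms(4) by (simp add: cmod_def)
  thus "of_real (Im a) \<in> circle_through 0 a" unfolding circle_through_def by simp
qed (rule assms C_zero C_one ne_0_ii ne_0_1)+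

lemma C_Re:
  assumes "0 \<in> S" "1 \<in> S" "a \<in> constructible S"
  shows "of_real (Re a) \<in> constructible S"
proof -
  have "(a + cnj a) / 2 \<in> constructible S" by (rule C_mid[OF assms(3) C_cnj[OF assms]])
  moreover have "(a + cnj a) / 2 = of_real (Re a)" by (simp add: complex_eq_iff)
  ultimately show ?thesis by (simp only:)
qed

lemma C_Im:
  assumes "0 \<in> S" "1 \<in> S" "a \<in> constructible S"
  shows "of_real (Im a) \<in> constructible S"
proof -
  have "(a + - cnj a) / 2 \<in> constructible S"
    by (rule C_mid[OF assms(3) C_uminus[OF assms(1) C_cnj[OF assms]]])
  from C_Im0[OF assms(1,2) this] show ?thesis by simp
qed

lemma C_rmult:
  assumes "0 \<in> S" "1 \<in> S" "of_real r \<in> constructible S" "of_real s \<in> constructible S"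
  shows "of_real (r * s) \<in> constructible S"
proof (cases "r * s = 0")
  case True
  hence e: "of_real (r * s) = (0::complex)" by simp
  show ?thesis unfolding e by (rule C_zero[OF assms(1)])
next
  case False
  define p where "p = of_real r + (\<i> * of_real s - 1)"
  have p: "p \<in> constructible S" unfolding p_def
    by (intro C_add C_diff C_ireal assms C_one)
  have z: "\<i> * of_real (r * s) \<in> constructible S"
  proof (rule constructible.line_line[of 0 S \<i> "of_real r" p])
    show "line_through 0 \<i> \<noteq> line_through (of_real r) p"
    proof
      assume eq: "line_through 0 \<i> = line_through (of_real r) p"
      have "0 \<in> line_through 0 \<i>" unfolding line_through_def by (auto intro: exI[of _ 0])
      hence "0 \<in> line_through (of_real r) p" using eq by simp
      then obtain u where "0 = of_real r + of_real u * (p - of_real r)"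
        unfolding line_through_def by blast
      hence a3: "0 = of_real r + of_real u * (p - of_real r)" .
      have "Re (of_real r + of_real u * (p - of_real r)) = r - u" "Im (of_real r + of_real u * (p - of_real r)) = u * s"
        unfolding p_def by simp_all
      with a3 have "r - u = 0" "u * s = 0" by (metis zero_complex.sel)+
      thus False using False by simp
    qed
    show "\<i> * of_real (r * s) \<in> line_through 0 \<i>" unfolding line_through_def
      by (rule CollectI, rule exI[of _ "r * s"]) simp
    show "\<i> * of_real (r * s) \<in> line_through (of_real r) p" unfolding line_through_def p_def
      by (rule CollectI, rule exI[of _ "r"]) (simp add: complex_eq_iff)
    show "of_real r \<noteq> p" unfolding p_def by (simp add: complex_eq_iff)
  qed (rule assms C_zero C_ii p ne_0_ii ne_0_1)+
  have h: "Im (\<i> * of_real (r * s)) = r * s" by simp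
  from C_Im[OF assms(1,2) z] show ?thesis unfolding h .
qed

lemma C_rinv:
  assumes "0 \<in> S" "1 \<in> S" "of_real r \<in> constructible S"
  shows "of_real (inverse r) \<in> constructible S"
proof (cases "r = 0")
  case True thus ?thesis using assms by (simp add: C_zero)
next
  case False
  define p where "p = 1 + (\<i> - of_real r)"
  have p: "p \<in> constructible S" unfolding p_def
    by (intro C_add C_diff assms C_one C_ii)
  have z: "\<i> * of_real (inverse r) \<in> constructible S"
  proof (rule constructible.line_line[of 0 S \<i> 1 p])
    show "line_through 0 \<i> \<noteq> line_through 1 p"
    proof
      assume eq: "line_through 0 \<i> = line_through 1 p"
      have "0 \<in> line_through 0 \<i>" unfolding line_through_def by (auto intro: exI[of _ 0])
      hence "0 \<in> line_through 1 p" using eq by simp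
      then obtain u where "0 = 1 + of_real u * (p - 1)"
        unfolding line_through_def by blast
      hence a3: "0 = 1 + of_real u * (p - 1)" .
      have "Re (1 + of_real u * (p - 1)) = 1 - u * r" "Im (1 + of_real u * (p - 1)) = u"
        unfolding p_def by simp_all
      with a3 have "1 - u * r = 0" "u = 0" by (metis zero_complex.sel)+
      thus False by simp
    qed
    show "\<i> * of_real (inverse r) \<in> line_through 0 \<i>" unfolding line_through_def
      by (rule CollectI, rule exI[of _ "inverse r"]) simp
    show "\<i> * of_real (inverse r) \<in> line_through 1 p" unfolding line_through_def p_def
      by (rule CollectI, rule exI[of _ "inverse r"]) (simp add: complex_eq_iff False power2_eq_square)
    show "1 \<noteq> p" unfolding p_def by (simp add: complex_eq_iff)
  qed (rule assms C_zero C_ii C_one p ne_0_ii ne_0_1)+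
  have h: "Im (\<i> * of_real (inverse r)) = inverse r" using False by (simp add: power2_eq_square divide_simps)
  from C_Im[OF assms(1,2) z] show ?thesis unfolding h .
qed

lemma C_mult:
  assumes "0 \<in> S" "1 \<in> S" "a \<in> constructible S" "b \<in> constructible S"
  shows "a * b \<in> constructible S"
proof -
  note R = C_Re[OF assms(1,2)] and I = C_Im[OF assms(1,2)]
  have "of_real (Re a * Re b) - of_real (Im a * Im b) + \<i> * of_real (Re a * Im b + Im a * Re b)
        \<in> constructible S"
    by (intro C_add C_diff C_ireal C_rmult assms R I) (simp only: of_real_add; intro C_add C_rmult assms R I)
  moreover have "of_real (Re a * Re b) - of_real (Im a * Im b) + \<i> * of_real (Re a * Im b + Im a * Re b) = a * b"
    by (simp add: complex_eq_iff)
  ultimately show ?thesis by (simp only:)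
qed

lemma C_inverse:
  assumes "0 \<in> S" "1 \<in> S" "a \<in> constructible S"
  shows "inverse a \<in> constructible S"
proof -
  have n: "of_real (inverse (Re a * Re a + Im a * Im a)) \<in> constructible S"
    by (intro C_rinv assms) (simp only: of_real_add; intro C_add C_rmult assms C_Re C_Im)
  have m: "cnj a * of_real (inverse (Re a * Re a + Im a * Im a)) \<in> constructible S"
    by (intro C_mult C_cnj assms n)
  have e: "inverse a = cnj a * of_real (inverse (Re a * Re a + Im a * Im a))"
    by (simp add: complex_eq_iff power2_eq_square)
  show ?thesis by (subst e) (rule m)
qed

lemma C_divide:
  assumes "0 \<in> S" "1 \<in> S" "a \<in> constructible S" "b \<in> constructible S"
  shows "a / b \<in> constructible S"
  unfolding divide_inverse by (rule C_mult[OF assms(1,2,3) C_inverse[OF assms(1,2,4)]])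

lemma C_sqrt:
  assumes "0 \<in> S" "1 \<in> S" "of_real r \<in> constructible S" "r \<ge> 0"
  shows "of_real (sqrt r) \<in> constructible S"
proof -
  define cc0 where "cc0 = (of_real r - 1) / (2::complex)"
  have cc0: "cc0 \<in> constructible S" unfolding cc0_def
    by (intro C_divide C_diff assms C_one) (use C_add[OF assms(1) C_one[OF assms(2)] C_one[OF assms(2)]] in simp)
  have z: "\<i> * of_real (sqrt r) \<in> constructible S"
  proof (rule constructible.line_circle[of 0 S \<i> cc0 "of_real r"])
    show "\<i> * of_real (sqrt r) \<in> line_through 0 \<i>" unfolding line_through_def
      by (rule CollectI, rule exI[of _ "sqrt r"]) simp
    have "(cmod (\<i> * of_real (sqrt r) - cc0))^2 = (cmod (of_real r - cc0))^2"
      unfolding cc0_def cmod_power2 using assms(4) by (simp add: power2_eq_square algebra_simps)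
    hence "cmod (\<i> * of_real (sqrt r) - cc0) = cmod (of_real r - cc0)"
      by (simp add: power2_eq_iff_nonneg)
    thus "\<i> * of_real (sqrt r) \<in> circle_through cc0 (of_real r)" unfolding circle_through_def by simp
  qed (rule assms C_zero C_ii cc0 ne_0_ii ne_0_1)+
  have h: "Im (\<i> * of_real (sqrt r)) = sqrt r" by simp
  from C_Im[OF assms(1,2) z] show ?thesis unfolding h .
qed



definition gc :: "real \<Rightarrow> complex \<Rightarrow> complex \<Rightarrow> bool" where
  "gc A b z \<longleftrightarrow> A * ((cmod z)^2 + 1) = 2 * Re (cnj b * z)"

lemma gc_iff: "gc A b z \<longleftrightarrow> A * ((Re z)^2 + (Im z)^2 + 1) = 2 * (Re b * Re z + Im b * Im z)"
  by (simp add: gc_def cmod_power2)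

definition bA :: "complex \<Rightarrow> complex \<Rightarrow> real" where
  "bA x y = (cmod x)^2 - (cmod y)^2"
definition bB :: "complex \<Rightarrow> complex \<Rightarrow> complex" where
  "bB x y = of_real (1 - (cmod y)^2) * x - of_real (1 - (cmod x)^2) * y"

lemma bis_iff:
  "gc (bA x y) (bB x y) z \<longleftrightarrow>
     (cmod (x - z))^2 * (1 - (cmod y)^2) = (cmod (z - y))^2 * (1 - (cmod x)^2)"
proof -
  have "(cmod (x - z))^2 * (1 - (cmod y)^2) - (cmod (z - y))^2 * (1 - (cmod x)^2)
      = bA x y * ((Re z)^2 + (Im z)^2 + 1) - 2 * (Re (bB x y) * Re z + Im (bB x y) * Im z)"
    unfolding bA_def bB_def cmod_power2 by (simp add: power2_eq_square algebra_simps)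
  thus ?thesis unfolding gc_iff by linarith
qed

lemma arsinh_inj: "arsinh (u::real) = arsinh v \<Longrightarrow> u = v"
  by (metis sinh_arsinh_real)

lemma hdist_eq_iff:
  assumes "cmod x < 1" "cmod y < 1" "cmod z < 1"
  shows "hdist x z = hdist z y \<longleftrightarrow>
     (cmod (x - z))^2 * (1 - (cmod y)^2) = (cmod (z - y))^2 * (1 - (cmod x)^2)"
proof -
  define sx where "sx = sqrt (1 - (cmod x)^2)"
  define sy where "sy = sqrt (1 - (cmod y)^2)"
  define sz where "sz = sqrt (1 - (cmod z)^2)"
  have pos: "sx > 0" "sy > 0" "sz > 0" unfolding sx_def sy_def sz_def using assms
    by (simp_all add: abs_square_less_1)
  have sq: "sx^2 = 1 - (cmod x)^2" "sy^2 = 1 - (cmod y)^2" unfolding sx_def sy_def using assms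
    by (simp_all add: abs_square_less_1 less_imp_le)
  have "hdist x z = hdist z y \<longleftrightarrow> cmod (x - z) / (sx * sz) = cmod (z - y) / (sz * sy)"
    unfolding hdist_def sx_def sy_def sz_def using arsinh_inj by auto
  also have "\<dots> \<longleftrightarrow> cmod (x - z) * sy = cmod (z - y) * sx"
    using pos by (simp add: field_simps)
  also have "\<dots> \<longleftrightarrow> (cmod (x - z) * sy)^2 = (cmod (z - y) * sx)^2"
    using pos by (simp add: power2_eq_iff_nonneg)
  also have "\<dots> \<longleftrightarrow> (cmod (x - z))^2 * (1 - (cmod y)^2) = (cmod (z - y))^2 * (1 - (cmod x)^2)"
    by (simp add: power_mult_distrib sq)
  finally show ?thesis .
qed

lemma lin2:
  fixes A p q A' p' q' k1 k2 l1 l2 W w1 w2 :: real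
  assumes d: "k1 \<noteq> l1 \<or> k2 \<noteq> l2"
    and e: "A = p*k1 + q*k2" "A = p*l1 + q*l2" "A' = p'*k1 + q'*k2" "A' = p'*l1 + q'*l2"
    and nz: "A' \<noteq> 0 \<or> p' \<noteq> 0 \<or> q' \<noteq> 0"
    and w: "A'*W = p'*w1 + q'*w2"
  shows "A*W = p*w1 + q*w2"
proof -
  define d1 where "d1 = k1 - l1"
  define d2 where "d2 = k2 - l2"
  have o1: "p*d1 + q*d2 = 0" "p'*d1 + q'*d2 = 0" using e unfolding d1_def d2_def by (simp_all add: algebra_simps)
  define m where "m = p*q' - q*p'"
  have "m * d1 = q' * (p*d1 + q*d2) - q * (p'*d1 + q'*d2)" unfolding m_def by (simp add: algebra_simps)
  hence m1: "m * d1 = 0" using o1 by simp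
  have "m * d2 = p * (p'*d1 + q'*d2) - p' * (p*d1 + q*d2)" unfolding m_def by (simp add: algebra_simps)
  hence m2: "m * d2 = 0" using o1 by simp
  have "d1 \<noteq> 0 \<or> d2 \<noteq> 0" using d unfolding d1_def d2_def by auto
  hence m0: "m = 0" using m1 m2 by auto
  have r1: "A*p' - A'*p = 0" using e(1,3) m0 unfolding m_def
    by (simp add: algebra_simps)
  have r2: "A*q' - A'*q = 0" using e(1,3) m0 unfolding m_def
    by (simp add: algebra_simps)
  have "A' * (A*W - p*w1 - q*w2) = A * (A'*W - p'*w1 - q'*w2) + (A*p' - A'*p)*w1 + (A*q' - A'*q)*w2"
    by (simp add: algebra_simps)
  hence s1: "A' * (A*W - p*w1 - q*w2) = 0" using w r1 r2 by simp
  have "p' * (A*W - p*w1 - q*w2) = p * (A'*W - p'*w1 - q'*w2) + (A*p' - A'*p)*W + m*w2"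
    unfolding m_def by (simp add: algebra_simps)
  hence s2: "p' * (A*W - p*w1 - q*w2) = 0" using w r1 m0 by simp
  have "q' * (A*W - p*w1 - q*w2) = q * (A'*W - p'*w1 - q'*w2) + (A*q' - A'*q)*W - m*w1"
    unfolding m_def by (simp add: algebra_simps)
  hence s3: "q' * (A*W - p*w1 - q*w2) = 0" using w r2 m0 by simp
  from nz s1 s2 s3 show ?thesis by auto
qed

lemma klein_inj:
  assumes "cmod z1 < 1" "cmod z2 < 1"
    and e: "Re z1 / (1 + (cmod z1)^2) = Re z2 / (1 + (cmod z2)^2)"
           "Im z1 / (1 + (cmod z1)^2) = Im z2 / (1 + (cmod z2)^2)"
  shows "z1 = z2"
proof -
  define r1 where "r1 = cmod z1"
  define r2 where "r2 = cmod z2"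
  have p1: "1 + r1^2 > 0" "1 + r2^2 > 0" by (simp_all add: add_pos_nonneg)
  have "z1 / of_real (1 + r1^2) = z2 / of_real (1 + r2^2)"
    using e unfolding r1_def r2_def by (simp add: complex_eq_iff)
  hence "cmod (z1 / of_real (1 + r1^2)) = cmod (z2 / of_real (1 + r2^2))" by simp
  moreover have "cmod (z1 / of_real (1 + r1^2)) = r1 / (1 + r1^2)"
    unfolding norm_divide norm_of_real using p1 r1_def by simp
  moreover have "cmod (z2 / of_real (1 + r2^2)) = r2 / (1 + r2^2)"
    unfolding norm_divide norm_of_real using p1 r2_def by simp
  ultimately have "r1 / (1 + r1^2) = r2 / (1 + r2^2)" by simp
  hence "r1 * (1 + r2^2) = r2 * (1 + r1^2)" using p1 by (simp add: field_simps)
  hence "(r1 - r2) * (1 - r1 * r2) = 0" by (simp add: power2_eq_square algebra_simps)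
  moreover have "r1 * r2 < 1"
  proof -
    have "r1 * r2 \<le> r1 * 1" by (rule mult_left_mono) (use assms(2) r1_def r2_def in auto)
    thus ?thesis using assms(1) r1_def by simp
  qed
  ultimately have "r1 = r2" by simp
  with e show ?thesis unfolding r1_def r2_def using p1 by (simp add: complex_eq_iff r1_def r2_def field_simps)
qed

lemma gc_klein:
  "gc A b z \<longleftrightarrow> A = Re b * (2 * Re z / (1 + (cmod z)^2)) + Im b * (2 * Im z / (1 + (cmod z)^2))"
proof -
  have p: "1 + (cmod z)^2 > 0" by (simp add: add_pos_nonneg)
  have "gc A b z \<longleftrightarrow> A * ((cmod z)^2 + 1) = 2 * (Re b * Re z + Im b * Im z)"
    by (simp add: gc_def)
  also have "\<dots> \<longleftrightarrow> A = 2 * (Re b * Re z + Im b * Im z) / (1 + (cmod z)^2)"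
    using p by (simp add: eq_divide_eq algebra_simps)
  also have "2 * (Re b * Re z + Im b * Im z) / (1 + (cmod z)^2) =
     Re b * (2 * Re z / (1 + (cmod z)^2)) + Im b * (2 * Im z / (1 + (cmod z)^2))"
    by (simp add: add_divide_distrib mult.left_commute)
  finally show ?thesis .
qed

lemma gc_unique:
  assumes "z1 \<noteq> z2" "cmod z1 < 1" "cmod z2 < 1"
    and "gc A b z1" "gc A b z2" "gc A' b' z1" "gc A' b' z2"
    and nz: "A' \<noteq> 0 \<or> b' \<noteq> 0" and w: "gc A' b' w"
  shows "gc A b w"
proof -
  have d: "2 * Re z1 / (1 + (cmod z1)^2) \<noteq> 2 * Re z2 / (1 + (cmod z2)^2) \<or>
           2 * Im z1 / (1 + (cmod z1)^2) \<noteq> 2 * Im z2 / (1 + (cmod z2)^2)"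
  proof (rule ccontr)
    assume "\<not> ?thesis"
    hence "Re z1 / (1 + (cmod z1)^2) = Re z2 / (1 + (cmod z2)^2)"
          "Im z1 / (1 + (cmod z1)^2) = Im z2 / (1 + (cmod z2)^2)" by auto
    from klein_inj[OF assms(2,3) this] assms(1) show False by simp
  qed
  have nz': "A' \<noteq> 0 \<or> Re b' \<noteq> 0 \<or> Im b' \<noteq> 0" using nz by (auto simp: complex_eq_iff)
  have w': "A' * (((Re w)^2 + (Im w)^2 + 1) / 2) = Re b' * Re w + Im b' * Im w"
    using w unfolding gc_iff by simp
  have "A * (((Re w)^2 + (Im w)^2 + 1) / 2) = Re b * Re w + Im b * Im w"
    by (rule lin2[OF d assms(4,5,6,7)[unfolded gc_klein] nz' w'])
  thus ?thesis unfolding gc_iff by simp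
qed



lemma aux_sq: "(1 - R * C)^2 + R^2 * (1 - C^2) = 1 - 2 * R * C + (R::real)^2"
  by (simp add: power2_eq_square algebra_simps)

lemma circ_norm:
  fixes c :: complex and r \<sigma> :: real
  assumes c0: "c \<noteq> 0"
  defines "u \<equiv> - c / of_real (cmod c)"
  shows "(cmod (c + of_real r * (u * cis \<sigma>)))^2 = (cmod c)^2 + r^2 - 2 * r * cmod c * cos \<sigma>"
proof -
  define n where "n = cmod c"
  have n0: "n > 0" using c0 n_def by simp
  have e: "c + of_real r * (u * cis \<sigma>) = c * (1 - of_real (r / n) * cis \<sigma>)"
    unfolding u_def n_def[symmetric] using n0 by (simp add: field_simps)
  have "(cmod (1 - of_real (r / n) * cis \<sigma>))^2 = (1 - r / n * cos \<sigma>)^2 + (r / n * sin \<sigma>)^2"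
    by (simp add: cmod_power2)
  also have "\<dots> = (1 - r / n * cos \<sigma>)^2 + (r / n)^2 * (1 - (cos \<sigma>)^2)"
    by (simp only: power_mult_distrib sin_squared_eq)
  also have "\<dots> = 1 - 2 * (r / n) * cos \<sigma> + (r/n)^2"
    by (rule aux_sq)
  finally have h: "(cmod (1 - of_real (r / n) * cis \<sigma>))^2 = 1 - 2 * (r / n) * cos \<sigma> + (r/n)^2" .
  have "(cmod (c + of_real r * (u * cis \<sigma>)))^2 = n^2 * (cmod (1 - of_real (r / n) * cis \<sigma>))^2"
    unfolding e norm_mult n_def by (simp add: power_mult_distrib)
  also have "\<dots> = n^2 + r^2 - 2 * r * n * cos \<sigma>" unfolding h using n0
    by (simp add: field_simps power2_eq_square)
  finally show ?thesis unfolding n_def .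
qed

lemma arc_point:
  fixes c z :: complex and r :: real
  assumes c0: "c \<noteq> 0" and r0: "r > 0" and zc: "cmod (z - c) = r"
  defines "u \<equiv> - c / of_real (cmod c)"
  shows "z = c + of_real r * (u * cis (Arg (cnj u * ((z - c) / of_real r))))"
proof -
  have u1: "cmod u = 1" unfolding u_def using c0 by (simp add: norm_divide)
  have uu: "u * cnj u = 1" using u1 by (metis complex_norm_square mult.commute of_real_1 power_one)
  define v where "v = cnj u * ((z - c) / of_real r)"
  have v1: "cmod v = 1" unfolding v_def using u1 zc r0 by (simp add: norm_mult norm_divide)
  hence "v \<noteq> 0" by auto
  hence "cis (Arg v) = v" using v1 by (simp add: cis_Arg sgn_eq)
  hence "u * cis (Arg v) = (u * cnj u) * ((z - c) / of_real r)" unfolding v_def by (simp add: mult.assoc)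
  also have "\<dots> = (z - c) / of_real r" using uu by simp
  finally have "of_real r * (u * cis (Arg v)) = z - c" using r0 by simp
  thus ?thesis unfolding v_def by (simp add: algebra_simps)
qed

lemma arc_exists:
  fixes c x y :: complex and r :: real
  assumes cr: "(cmod c)^2 = 1 + r^2" and r0: "r > 0" and x1: "cmod x < 1" and y1: "cmod y < 1"
    and xc: "cmod (x - c) = r" and yc: "cmod (y - c) = r"
  shows "\<exists>a b. x = c + of_real r * cis a \<and> y = c + of_real r * cis b \<and>
          (\<forall>t\<in>closed_segment a b. cmod (c + of_real r * cis t) < 1)"
proof -
  have c0: "c \<noteq> 0"
  proof
    assume "c = 0"
    with cr have "1 + r^2 = 0" by simp
    moreover have "1 + r^2 > 0" by (simp add: add_pos_nonneg)
    ultimately show False by simp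
  qed
  define u where "u = - c / of_real (cmod c)"
  have u1: "cmod u = 1" unfolding u_def using c0 by (simp add: norm_divide)
  hence "u \<noteq> 0" by auto
  hence cisth: "cis (Arg u) = u" using u1 by (simp add: cis_Arg sgn_eq)
  define sx where "sx = Arg (cnj u * ((x - c) / of_real r))"
  define sy where "sy = Arg (cnj u * ((y - c) / of_real r))"
  have xe: "x = c + of_real r * (u * cis sx)" unfolding sx_def u_def by (rule arc_point[OF c0 r0 xc])
  have ye: "y = c + of_real r * (u * cis sy)" unfolding sy_def u_def by (rule arc_point[OF c0 r0 yc])
  have key: "cmod (c + of_real r * (u * cis s)) < 1 \<longleftrightarrow> r < cmod c * cos s" for s
  proof -
    have "cmod (c + of_real r * (u * cis s)) < 1 \<longleftrightarrow> (cmod (c + of_real r * (u * cis s)))^2 < 1^2"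
      by (simp add: power_less_one_iff abs_square_less_1)
    also have "\<dots> \<longleftrightarrow> (cmod c)^2 + r^2 - 2 * r * cmod c * cos s < 1"
      unfolding u_def circ_norm[OF c0] by simp
    also have "\<dots> \<longleftrightarrow> 2 * r * r < 2 * r * (cmod c * cos s)" using cr by (simp add: power2_eq_square algebra_simps)
    also have "\<dots> \<longleftrightarrow> r < cmod c * cos s" using r0 by simp
    finally show ?thesis .
  qed
  have kx: "r < cmod c * cos sx" using key[of sx] xe x1 by simp
  have ky: "r < cmod c * cos sy" using key[of sy] ye y1 by simp
  have bx: "\<bar>sx\<bar> \<le> pi" "\<bar>sy\<bar> \<le> pi" unfolding sx_def sy_def using Arg_bounded
    by (metis abs_le_iff less_eq_real_def minus_less_iff)+
  show ?thesis
  proof (intro exI conjI ballI)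
    show "x = c + of_real r * cis (Arg u + sx)" using xe cisth by (simp add: cis_mult[symmetric])
    show "y = c + of_real r * cis (Arg u + sy)" using ye cisth by (simp add: cis_mult[symmetric])
    fix t assume t: "t \<in> closed_segment (Arg u + sx) (Arg u + sy)"
    define s where "s = t - Arg u"
    have ts: "t = Arg u + s" unfolding s_def by simp
    have sb: "min sx sy \<le> s \<and> s \<le> max sx sy" using t unfolding s_def closed_segment_eq_real_ivl
      by (auto split: if_splits)
    have "cos s \<ge> min (cos sx) (cos sy)"
    proof (cases "\<bar>s\<bar> \<le> \<bar>sx\<bar>")
      case True
      have "cos \<bar>sx\<bar> \<le> cos \<bar>s\<bar>" by (rule cos_monotone_0_pi_le) (use True bx in auto)
      thus ?thesis by simp
    next
      case False
      hence "\<bar>s\<bar> \<le> \<bar>sy\<bar>" using sb by auto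
      have "cos \<bar>sy\<bar> \<le> cos \<bar>s\<bar>" by (rule cos_monotone_0_pi_le) (use \<open>\<bar>s\<bar> \<le> \<bar>sy\<bar>\<close> bx in auto)
      thus ?thesis by simp
    qed
    hence "r < cmod c * cos s" using kx ky c0
      by (smt (verit, ccfv_SIG) mult_left_mono norm_ge_zero)
    hence "cmod (c + of_real r * (u * cis s)) < 1" using key by simp
    thus "cmod (c + of_real r * cis t) < 1" unfolding ts using cisth by (simp add: cis_mult[symmetric] mult.assoc)
  qed
qed



definition dlt :: "complex \<Rightarrow> complex \<Rightarrow> real" where
  "dlt x y = Re x * Im y - Im x * Re y"
definition al :: "complex \<Rightarrow> real" where
  "al z = ((cmod z)^2 + 1) / 2"
definition cen :: "complex \<Rightarrow> complex \<Rightarrow> complex" where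
  "cen x y = Complex ((al x * Im y - al y * Im x) / dlt x y) ((al y * Re x - al x * Re y) / dlt x y)"
definition dd :: "complex \<Rightarrow> complex \<Rightarrow> complex" where
  "dd x y = (if x = 0 then y else x)"

lemma Im_x_cnj_y: "Im (x * cnj y) = - dlt x y"
  by (simp add: dlt_def)

lemma gc1_iff: "gc 1 c z \<longleftrightarrow> Re c * Re z + Im c * Im z = al z"
  unfolding gc_iff al_def cmod_power2 by auto

lemma cen_gc:
  assumes "dlt x y \<noteq> 0"
  shows "gc 1 (cen x y) x" "gc 1 (cen x y) y"
proof -
  define D where "D = dlt x y"
  have D: "D \<noteq> 0" using assms D_def by simp
  have "Re (cen x y) * Re x + Im (cen x y) * Im x =
        ((al x * Im y - al y * Im x) * Re x + (al y * Re x - al x * Re y) * Im x) / D"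
    unfolding cen_def D_def by (simp add: add_divide_distrib)
  also have "\<dots> = al x * D / D" unfolding D_def dlt_def by (simp add: algebra_simps)
  finally show "gc 1 (cen x y) x" unfolding gc1_iff using D by simp
  have "Re (cen x y) * Re y + Im (cen x y) * Im y =
        ((al x * Im y - al y * Im x) * Re y + (al y * Re x - al x * Re y) * Im y) / D"
    unfolding cen_def D_def by (simp add: add_divide_distrib)
  also have "\<dots> = al y * D / D" unfolding D_def dlt_def by (simp add: algebra_simps)
  finally show "gc 1 (cen x y) y" unfolding gc1_iff using D by simp
qed

lemma cen_unique:
  assumes "dlt x y \<noteq> 0" "gc 1 c x" "gc 1 c y"
  shows "c = cen x y"
proof -
  define D where "D = dlt x y"
  have D: "D \<noteq> 0" using assms D_def by simp
  have ex: "Re c * Re x + Im c * Im x = al x" and ey: "Re c * Re y + Im c * Im y = al y"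
    using assms(2,3) unfolding gc1_iff by auto
  have "Re c * D = Im y * (Re c * Re x + Im c * Im x) - Im x * (Re c * Re y + Im c * Im y)"
    unfolding D_def dlt_def by (simp add: algebra_simps)
  hence r: "Re c * D = al x * Im y - al y * Im x" using ex ey by simp
  have "Im c * D = Re x * (Re c * Re y + Im c * Im y) - Re y * (Re c * Re x + Im c * Im x)"
    unfolding D_def dlt_def by (simp add: algebra_simps)
  hence i: "Im c * D = al y * Re x - al x * Re y" using ex ey by simp
  show ?thesis unfolding cen_def D_def[symmetric] complex_eq_iff using r i D
    by (simp add: eq_divide_eq)
qed

lemma circ_aux:
  fixes p q r C S :: real
  assumes "p^2 + q^2 = 1 + r^2" "S^2 + C^2 = 1"
  shows "1 * ((p + r * C)^2 + (q + r * S)^2 + 1) = 2 * (p * (p + r * C) + q * (q + r * S))"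
  using assms by algebra

lemma circ_gc:
  assumes "(cmod c)^2 = 1 + r^2"
  shows "gc 1 c (c + of_real r * cis t)"
proof -
  have cs: "(sin t)^2 = 1 - (cos t)^2" by (rule sin_squared_eq)
  have h: "(Re c)^2 + (Im c)^2 = 1 + r^2" using assms by (simp add: cmod_power2)
  show ?thesis unfolding gc_iff using circ_aux[OF h sin_cos_squared_add[of t]] by simp
qed

lemma hgeod_NC:
  assumes "dlt x y \<noteq> 0" "z \<in> hgeod x y"
  shows "cmod z < 1 \<and> gc 1 (cen x y) z"
proof -
  have "Im (x * cnj y) \<noteq> 0" using assms(1) by (simp add: dlt_def)
  hence "\<exists>c r a b. r > 0 \<and> (cmod c)\<^sup>2 = 1 + r\<^sup>2 \<and>
                x = c + of_real r * cis a \<and> y = c + of_real r * cis b \<and>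
                (\<forall>t\<in>closed_segment a b. cmod (c + of_real r * cis t) < 1) \<and>
                (\<exists>t\<in>closed_segment a b. z = c + of_real r * cis t)"
    using assms(2) unfolding hgeod_def by simp
  then obtain c r a b where cr: "r > 0" "(cmod c)^2 = 1 + r^2"
      and xy: "x = c + of_real r * cis a" "y = c + of_real r * cis b"
      and ins: "\<forall>t\<in>closed_segment a b. cmod (c + of_real r * cis t) < 1"
      and zt: "\<exists>t\<in>closed_segment a b. z = c + of_real r * cis t"
    by blast
  have "c = cen x y"
    by (rule cen_unique[OF assms(1)]) (simp_all add: xy circ_gc[OF cr(2)])
  moreover obtain t where t: "t \<in> closed_segment a b" "z = c + of_real r * cis t" using zt by blast
  ultimately show ?thesis using ins circ_gc[OF cr(2)] by auto
qed

lemma hgeod_CO: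
  assumes "dlt x y = 0" "cmod x < 1" "cmod y < 1" "z \<in> hgeod x y"
  shows "cmod z < 1 \<and> gc 0 (\<i> * dd x y) z"
proof -
  have "Im (x * cnj y) = 0" using assms(1) by (simp add: dlt_def)
  hence zs: "z \<in> closed_segment x y" using assms(4) unfolding hgeod_def by simp
  have "closed_segment x y \<subseteq> ball 0 1"
    by (rule closed_segment_subset) (use assms(2,3) in auto)
  hence z1: "cmod z < 1" using zs by auto
  obtain u where u: "z = (1 - u) *\<^sub>R x + u *\<^sub>R y" using zs unfolding closed_segment_def by auto
  have "gc 0 (\<i> * dd x y) z"
  proof (cases "x = 0")
    case True
    show ?thesis unfolding gc_iff dd_def using True u by (simp add: algebra_simps)
  next
    case False
    have "Re x * Im z - Im x * Re z = u * dlt x y" unfolding u dlt_def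
      by (simp add: algebra_simps)
    thus ?thesis unfolding gc_iff dd_def using False assms(1) by (simp add: algebra_simps)
  qed
  with z1 show ?thesis by simp
qed

lemma hdist_self: "hdist x x = 0"
  unfolding hdist_def by simp

lemma hdist_nonneg:
  assumes "cmod x < 1" "cmod y < 1"
  shows "hdist x y \<ge> 0"
proof -
  define v where "v = cmod (x - y) / (sqrt (1 - (cmod x)\<^sup>2) * sqrt (1 - (cmod y)\<^sup>2))"
  have "(cmod x)^2 \<le> 1" "(cmod y)^2 \<le> 1" using assms by (simp_all add: power_le_one less_imp_le)
  hence "v \<ge> 0" unfolding v_def by simp
  hence a: "arsinh v \<ge> 0" using arsinh_real_neg_iff[of v] by linarith
  show ?thesis unfolding hdist_def v_def[symmetric] using a by simp
qed



lemma ivt_geo: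
  fixes p :: "real \<Rightarrow> complex"
  assumes pc: "continuous_on (closed_segment a b) p"
    and pin: "\<forall>t\<in>closed_segment a b. cmod (p t) < 1"
    and pa: "p a = x" and pb: "p b = y" and x1: "cmod x < 1" and y1: "cmod y < 1"
  shows "\<exists>t\<in>closed_segment a b. hdist x (p t) = hdist (p t) y"
proof -
  define f where "f t = hdist x (p t) - hdist (p t) y" for t
  have nz: "\<forall>t\<in>closed_segment a b. sqrt (1 - (cmod (p t))\<^sup>2) \<noteq> 0"
  proof
    fix t assume "t \<in> closed_segment a b"
    hence "cmod (p t) < 1" using pin by blast
    hence "(cmod (p t))^2 < 1" by (simp add: abs_square_less_1)
    thus "sqrt (1 - (cmod (p t))^2) \<noteq> 0" by simp
  qed
  have "(cmod x)^2 < 1" "(cmod y)^2 < 1" using x1 y1 by (simp_all add: abs_square_less_1)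
  hence nzx: "sqrt (1 - (cmod x)\<^sup>2) \<noteq> 0" "sqrt (1 - (cmod y)\<^sup>2) \<noteq> 0" by simp_all
  have fc: "continuous_on (closed_segment a b) f"
    unfolding f_def hdist_def
    by (intro continuous_intros pc) (use nz nzx in auto)
  have h0: "hdist x y \<ge> 0" by (rule hdist_nonneg[OF x1 y1])
  have "0 \<in> closed_segment (f a) (f b)"
    unfolding f_def pa pb hdist_self closed_segment_eq_real_ivl using h0 by auto
  from IVT'_closed_segment_real[OF this fc] show ?thesis unfolding f_def by auto
qed

lemma gc1_norm: "gc 1 c z \<Longrightarrow> (cmod (z - c))^2 = (cmod c)^2 - 1"
  unfolding gc_iff cmod_power2 by (simp add: power2_eq_square algebra_simps)

lemma gc1_big:
  assumes "gc 1 c z" "cmod z < 1"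
  shows "(cmod c)^2 > 1"
proof (rule ccontr)
  assume "\<not> ?thesis"
  hence "(cmod c)^2 \<le> 1" by simp
  hence c1: "cmod c \<le> 1" by (simp add: power_le_one_iff)
  have "Re (cnj c * z) \<le> cmod (cnj c * z)" by (rule complex_Re_le_cmod)
  also have "\<dots> = cmod c * cmod z" by (simp add: norm_mult)
  also have "\<dots> \<le> cmod z" using c1 by (simp add: mult_left_le_one_le)
  finally have "Re (cnj c * z) \<le> cmod z" .
  moreover have "(cmod z)^2 + 1 = 2 * Re (cnj c * z)" using assms(1) unfolding gc_def by simp
  ultimately have "(cmod z - 1)^2 \<le> 0" by (simp add: power2_eq_square algebra_simps)
  hence "cmod z = 1" by simp
  thus False using assms(2) by simp
qed

lemma exists_mid:
  assumes x1: "cmod x < 1" and y1: "cmod y < 1"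
  shows "\<exists>z\<in>hgeod x y. hdist x z = hdist z y"
proof (cases "dlt x y = 0")
  case True
  hence I: "Im (x * cnj y) = 0" by (simp add: dlt_def)
  define p where "p t = (1 - t) *\<^sub>R x + t *\<^sub>R y" for t :: real
  have seg: "closed_segment 0 (1::real) = {0..1}" by (simp add: closed_segment_eq_real_ivl)
  have pxy: "p t \<in> closed_segment x y" if "t \<in> closed_segment 0 1" for t
    using that unfolding seg closed_segment_def p_def by auto
  have sub: "closed_segment x y \<subseteq> ball 0 1"
    by (rule closed_segment_subset) (use x1 y1 in auto)
  have "\<exists>t\<in>closed_segment 0 1. hdist x (p t) = hdist (p t) y"
  proof (rule ivt_geo)
    show "continuous_on (closed_segment 0 1) p" unfolding p_def by (intro continuous_intros)
    show "\<forall>t\<in>closed_segment 0 1. cmod (p t) < 1" using pxy sub by fastforce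
  qed (simp_all add: p_def x1 y1)
  then obtain t where "t \<in> closed_segment 0 1" "hdist x (p t) = hdist (p t) y" by blast
  moreover have "p t \<in> hgeod x y" using pxy[OF calculation(1)] I unfolding hgeod_def by simp
  ultimately show ?thesis by blast
next
  case False
  define c where "c = cen x y"
  have gx: "gc 1 c x" and gy: "gc 1 c y" using cen_gc[OF False] c_def by auto
  have cb: "(cmod c)^2 > 1" by (rule gc1_big[OF gx x1])
  define r where "r = sqrt ((cmod c)^2 - 1)"
  have r0: "r > 0" unfolding r_def using cb by simp
  have r2: "r^2 = (cmod c)^2 - 1" unfolding r_def using cb by simp
  have cr: "(cmod c)^2 = 1 + r^2" using r2 by simp
  have xc: "cmod (x - c) = r" unfolding r_def using gc1_norm[OF gx] by (simp add: real_sqrt_unique[symmetric])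
  have yc: "cmod (y - c) = r" unfolding r_def using gc1_norm[OF gy] by (simp add: real_sqrt_unique[symmetric])
  obtain a b where ab: "x = c + of_real r * cis a" "y = c + of_real r * cis b"
      and ins: "\<forall>t\<in>closed_segment a b. cmod (c + of_real r * cis t) < 1"
    using arc_exists[OF cr r0 x1 y1 xc yc] by blast
  define p where "p t = c + of_real r * cis t" for t
  have "\<exists>t\<in>closed_segment a b. hdist x (p t) = hdist (p t) y"
  proof (rule ivt_geo)
    show "continuous_on (closed_segment a b) p" unfolding p_def cis_conv_exp
      by (intro continuous_intros)
  qed (use ins ab x1 y1 in \<open>simp_all add: p_def\<close>)
  then obtain t where t: "t \<in> closed_segment a b" "hdist x (p t) = hdist (p t) y" by blast
  have I: "Im (x * cnj y) \<noteq> 0" using False by (simp add: dlt_def)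
  have "\<exists>c r a b. r > 0 \<and> (cmod c)\<^sup>2 = 1 + r\<^sup>2 \<and>
                x = c + of_real r * cis a \<and> y = c + of_real r * cis b \<and>
                (\<forall>t\<in>closed_segment a b. cmod (c + of_real r * cis t) < 1) \<and>
                (\<exists>ta\<in>closed_segment a b. p t = c + of_real r * cis ta)"
    using r0 cr ab ins t(1) unfolding p_def by blast
  hence "p t \<in> hgeod x y" unfolding hgeod_def using I by simp
  with t show ?thesis by blast
qed



lemma CR_add: "0 \<in> S \<Longrightarrow> of_real a \<in> constructible S \<Longrightarrow> of_real b \<in> constructible S \<Longrightarrow> of_real (a + b) \<in> constructible S"
  unfolding of_real_add by (rule C_add)
lemma CR_diff: "0 \<in> S \<Longrightarrow> of_real a \<in> constructible S \<Longrightarrow> of_real b \<in> constructible S \<Longrightarrow> of_real (a - b) \<in> constructible S"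
  unfolding of_real_diff by (rule C_diff)
lemma CR_mult: "0 \<in> S \<Longrightarrow> 1 \<in> S \<Longrightarrow> of_real a \<in> constructible S \<Longrightarrow> of_real b \<in> constructible S \<Longrightarrow> of_real (a * b) \<in> constructible S"
  unfolding of_real_mult by (rule C_mult)
lemma CR_div: "0 \<in> S \<Longrightarrow> 1 \<in> S \<Longrightarrow> of_real a \<in> constructible S \<Longrightarrow> of_real b \<in> constructible S \<Longrightarrow> of_real (a / b) \<in> constructible S"
  unfolding of_real_divide by (rule C_divide)
lemma CR_one: "1 \<in> S \<Longrightarrow> of_real 1 \<in> constructible S"
  unfolding of_real_1 by (rule C_one)
lemma CR_two: "0 \<in> S \<Longrightarrow> 1 \<in> S \<Longrightarrow> of_real 2 \<in> constructible S"
proof -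
  assume a: "0 \<in> S" "1 \<in> S"
  have "of_real (1 + 1) \<in> constructible S" by (intro CR_add CR_one a)
  thus ?thesis by simp
qed
lemma CR_cmod2: "0 \<in> S \<Longrightarrow> 1 \<in> S \<Longrightarrow> z \<in> constructible S \<Longrightarrow> of_real ((cmod z)^2) \<in> constructible S"
proof -
  assume a: "0 \<in> S" "1 \<in> S" "z \<in> constructible S"
  have "of_real (Re z * Re z + Im z * Im z) \<in> constructible S"
    by (intro CR_add CR_mult C_Re C_Im a)
  moreover have "(cmod z)^2 = Re z * Re z + Im z * Im z" by (simp only: cmod_power2) (simp add: power2_eq_square)
  ultimately show ?thesis by (simp only:)
qed
lemma C_of_parts: "0 \<in> S \<Longrightarrow> 1 \<in> S \<Longrightarrow> of_real (Re z) \<in> constructible S \<Longrightarrow> of_real (Im z) \<in> constructible S \<Longrightarrow> z \<in> constructible S"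
proof -
  assume a: "0 \<in> S" "1 \<in> S" "of_real (Re z) \<in> constructible S" "of_real (Im z) \<in> constructible S"
  have "of_real (Re z) + \<i> * of_real (Im z) \<in> constructible S"
    by (intro C_add C_mult C_ii a)
  moreover have "of_real (Re z) + \<i> * of_real (Im z) = z" by (simp add: complex_eq_iff)
  ultimately show ?thesis by (simp only:)
qed

section \<open>Lines and circles as generalized circles\<close>

lemma line_of_gc0:
  assumes "d \<noteq> 0" "gc 0 (\<i> * d) z"
  shows "z \<in> line_through 0 d"
proof -
  have e: "Re d * Im z = Im d * Re z" using assms(2) unfolding gc_iff by simp
  have "Im (z / d) = 0" using e by (simp add: Im_divide algebra_simps)
  hence "z / d = of_real (Re (z / d))" by (simp add: complex_eq_iff)
  hence "z = of_real (Re (z / d)) * d" using assms(1) by (simp add: divide_eq_eq)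
  thus ?thesis unfolding line_through_def by auto
qed

lemma gc0_of_line:
  assumes "z \<in> line_through 0 d"
  shows "gc 0 (\<i> * d) z"
proof -
  obtain t where "z = of_real t * d" using assms unfolding line_through_def by auto
  thus ?thesis unfolding gc_iff by (simp add: algebra_simps)
qed

lemma gc0_neg: "gc 0 (- b) z \<longleftrightarrow> gc 0 b z"
  unfolding gc_iff by auto

lemma circ_of_gc:
  assumes A: "A \<noteq> 0"
  shows "gc A B z \<longleftrightarrow> (cmod (z - B / of_real A))^2 = (cmod (B / of_real A))^2 - 1"
proof -
  have "(cmod (z - B / of_real A))^2 - ((cmod (B / of_real A))^2 - 1) =
        ((Re z)^2 + (Im z)^2 + 1) - 2 * (Re B * Re z + Im B * Im z) / A"
    unfolding cmod_power2 using A by (simp add: power2_eq_square field_simps)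
  also have "\<dots> = (A * ((Re z)^2 + (Im z)^2 + 1) - 2 * (Re B * Re z + Im B * Im z)) / A"
    using A by (simp add: field_simps)
  finally have e: "(cmod (z - B / of_real A))^2 - ((cmod (B / of_real A))^2 - 1) =
        (A * ((Re z)^2 + (Im z)^2 + 1) - 2 * (Re B * Re z + Im B * Im z)) / A" .
  show ?thesis unfolding gc_iff
  proof
    assume "A * ((Re z)^2 + (Im z)^2 + 1) = 2 * (Re B * Re z + Im B * Im z)"
    with e show "(cmod (z - B / of_real A))^2 = (cmod (B / of_real A))^2 - 1" by simp
  next
    assume "(cmod (z - B / of_real A))^2 = (cmod (B / of_real A))^2 - 1"
    with e have "(A * ((Re z)^2 + (Im z)^2 + 1) - 2 * (Re B * Re z + Im B * Im z)) / A = 0" by simp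
    with A show "A * ((Re z)^2 + (Im z)^2 + 1) = 2 * (Re B * Re z + Im B * Im z)" by simp
  qed
qed



definition GA :: "complex \<Rightarrow> complex \<Rightarrow> real" where
  "GA x y = (if dlt x y = 0 then 0 else 1)"
definition GB :: "complex \<Rightarrow> complex \<Rightarrow> complex" where
  "GB x y = (if dlt x y = 0 then \<i> * dd x y else cen x y)"

lemma hgeod_G:
  assumes "cmod x < 1" "cmod y < 1" "z \<in> hgeod x y"
  shows "cmod z < 1 \<and> gc (GA x y) (GB x y) z"
proof (cases "dlt x y = 0")
  case True thus ?thesis using hgeod_CO[OF True assms] by (simp add: GA_def GB_def)
next
  case False thus ?thesis using hgeod_NC[OF False assms(3)] by (simp add: GA_def GB_def)
qed

lemma G_x:
  assumes "cmod x < 1" "cmod y < 1"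
  shows "gc (GA x y) (GB x y) x"
proof (cases "dlt x y = 0")
  case True
  hence "Im (x * cnj y) = 0" by (simp add: dlt_def)
  hence "x \<in> hgeod x y" unfolding hgeod_def by simp
  thus ?thesis using hgeod_G[OF assms] by blast
next
  case False thus ?thesis using cen_gc[OF False] by (simp add: GA_def GB_def)
qed

lemma G_nz:
  assumes "x \<noteq> y"
  shows "GA x y \<noteq> 0 \<or> GB x y \<noteq> 0"
proof (cases "dlt x y = 0")
  case True
  have "dd x y \<noteq> 0" unfolding dd_def using assms by auto
  thus ?thesis using True by (simp add: GB_def)
next
  case False thus ?thesis by (simp add: GA_def)
qed

lemma bis_m:
  assumes "cmod x < 1" "cmod y < 1" "cmod z < 1"
  shows "hdist x z = hdist z y \<longleftrightarrow> gc (bA x y) (bB x y) z"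
  using hdist_eq_iff[OF assms] bis_iff by simp

lemma bis_not_x:
  assumes "x \<noteq> y" "cmod x < 1"
  shows "\<not> gc (bA x y) (bB x y) x"
proof
  assume "gc (bA x y) (bB x y) x"
  hence "(cmod (x - y))^2 * (1 - (cmod x)^2) = 0" unfolding bis_iff by simp
  moreover have "(cmod (x - y))^2 > 0" using assms(1) by simp
  moreover have "1 - (cmod x)^2 > 0" using assms(2) by (simp add: abs_square_less_1)
  ultimately show False by simp
qed

lemma mid_ex1:
  assumes x1: "cmod x < 1" and y1: "cmod y < 1" and xy: "x \<noteq> y"
  shows "\<exists>!z. z \<in> hgeod x y \<and> hdist x z = hdist z y"
proof -
  obtain z where "z \<in> hgeod x y" "hdist x z = hdist z y" using exists_mid[OF x1 y1] by blast
  moreover have "z1 = z2" if h: "z1 \<in> hgeod x y" "hdist x z1 = hdist z1 y"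
      "z2 \<in> hgeod x y" "hdist x z2 = hdist z2 y" for z1 z2
  proof (rule ccontr)
    assume ne: "z1 \<noteq> z2"
    have g1: "cmod z1 < 1" "gc (GA x y) (GB x y) z1" using hgeod_G[OF x1 y1 h(1)] by auto
    have g2: "cmod z2 < 1" "gc (GA x y) (GB x y) z2" using hgeod_G[OF x1 y1 h(3)] by auto
    have b1: "gc (bA x y) (bB x y) z1" using bis_m[OF x1 y1 g1(1)] h(2) by simp
    have b2: "gc (bA x y) (bB x y) z2" using bis_m[OF x1 y1 g2(1)] h(4) by simp
    have "gc (bA x y) (bB x y) x"
      by (rule gc_unique[OF ne g1(1) g2(1) b1 b2 g1(2) g2(2) G_nz[OF xy] G_x[OF x1 y1]])
    with bis_not_x[OF xy x1] show False by simp
  qed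
  ultimately show ?thesis by blast
qed



theorem theorem1p2:
  fixes x y :: complex
  assumes "cmod x < 1" and "cmod y < 1" and "x \<noteq> y"
  shows "hmidpoint x y \<in> constructible {0, 1, x, y}"
proof -
  note x1 = assms(1) and y1 = assms(2) and xy = assms(3)
  define S where "S = {0, 1, x, y :: complex}"
  have s0: "0 \<in> S" and s1: "1 \<in> S" unfolding S_def by auto
  have cx: "x \<in> constructible S" and cy: "y \<in> constructible S"
    unfolding S_def by (auto intro: constructible.base)
  define m where "m = hmidpoint x y"
  have P: "m \<in> hgeod x y \<and> hdist x m = hdist m y"
    unfolding m_def hmidpoint_def by (rule theI'[OF mid_ex1[OF x1 y1 xy]])
  have m1: "cmod m < 1" and mG: "gc (GA x y) (GB x y) m" using hgeod_G[OF x1 y1] P by auto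
  define A where "A = bA x y"
  define B where "B = bB x y"
  have mB: "gc A B m" using bis_m[OF x1 y1 m1] P unfolding A_def B_def by simp
  have nx: "\<not> gc A B x" using bis_not_x[OF xy x1] unfolding A_def B_def .
  have xG: "gc (GA x y) (GB x y) x" by (rule G_x[OF x1 y1])
  have CA: "of_real A \<in> constructible S" unfolding A_def bA_def
    by (intro CR_diff CR_cmod2 s0 s1 cx cy)
  have CB: "B \<in> constructible S" unfolding B_def bB_def
    by (intro C_diff C_mult CR_diff CR_one CR_cmod2 s0 s1 cx cy)
  have Ccen: "cen x y \<in> constructible S"
  proof (rule C_of_parts[OF s0 s1])
    show "of_real (Re (cen x y)) \<in> constructible S" unfolding cen_def complex.sel al_def dlt_def
      by (intro CR_div CR_diff CR_mult CR_add CR_cmod2 CR_one CR_two C_Re C_Im s0 s1 cx cy)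
    show "of_real (Im (cen x y)) \<in> constructible S" unfolding cen_def complex.sel al_def dlt_def
      by (intro CR_div CR_diff CR_mult CR_add CR_cmod2 CR_one CR_two C_Re C_Im s0 s1 cx cy)
  qed
  have Cdd: "dd x y \<in> constructible S" unfolding dd_def using cx cy by simp
  have ddnz: "dd x y \<noteq> 0" unfolding dd_def using xy by auto
  have "m \<in> constructible S"
  proof (cases "A = 0")
    case False
    define o1 where "o1 = B / of_real A"
    have Co: "o1 \<in> constructible S" unfolding o1_def by (intro C_divide s0 s1 CB CA)
    have mo: "(cmod (m - o1))^2 = (cmod o1)^2 - 1" using mB circ_of_gc[OF False] o1_def by simp
    hence ge: "(cmod o1)^2 - 1 \<ge> 0" by (metis zero_le_power2)
    define \<rho> where "\<rho> = sqrt ((cmod o1)^2 - 1)"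
    have C\<rho>: "of_real \<rho> \<in> constructible S" unfolding \<rho>_def
      by (intro C_sqrt CR_diff CR_cmod2 CR_one s0 s1 Co ge)
    define p where "p = o1 + of_real \<rho>"
    have Cp: "p \<in> constructible S" unfolding p_def by (intro C_add s0 Co C\<rho>)
    have \<rho>0: "\<rho> \<ge> 0" unfolding \<rho>_def using ge by simp
    have po: "cmod (p - o1) = \<rho>" unfolding p_def using \<rho>0 by simp
    have circ_iff: "z \<in> circle_through o1 p \<longleftrightarrow> gc A B z" for z
    proof -
      have "z \<in> circle_through o1 p \<longleftrightarrow> cmod (z - o1) = \<rho>" unfolding circle_through_def po by simp
      also have "\<dots> \<longleftrightarrow> (cmod (z - o1))^2 = (cmod o1)^2 - 1"
        unfolding \<rho>_def using ge by (auto simp: real_sqrt_unique)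
      also have "\<dots> \<longleftrightarrow> gc A B z" using circ_of_gc[OF False] o1_def by simp
      finally show ?thesis .
    qed
    have mc: "m \<in> circle_through o1 p" using circ_iff mB by simp
    show ?thesis
    proof (cases "dlt x y = 0")
      case True
      have "gc 0 (\<i> * dd x y) m" using mG True by (simp add: GA_def GB_def)
      hence ml: "m \<in> line_through 0 (dd x y)" by (rule line_of_gc0[OF ddnz])
      show ?thesis
        by (rule constructible.line_circle[OF C_zero[OF s0] Cdd Co Cp ddnz[symmetric] ml mc])
    next
      case NC: False
      define c where "c = cen x y"
      have gm: "gc 1 c m" and gx: "gc 1 c x" using mG xG NC unfolding c_def by (simp_all add: GA_def GB_def)
      have "(cmod (m - c))^2 = (cmod (x - c))^2" using gc1_norm[OF gm] gc1_norm[OF gx] by simp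
      hence "cmod (m - c) = cmod (x - c)" by (simp add: power2_eq_iff_nonneg)
      hence mc2: "m \<in> circle_through c x" unfolding circle_through_def by simp
      have ne: "circle_through c x \<noteq> circle_through o1 p"
      proof
        assume eq: "circle_through c x = circle_through o1 p"
        have "x \<in> circle_through c x" unfolding circle_through_def by simp
        hence "x \<in> circle_through o1 p" by (simp only: eq)
        hence "gc A B x" using circ_iff by simp
        with nx show False by simp
      qed
      show ?thesis
        by (rule constructible.circle_circle[OF Ccen[folded c_def] cx Co Cp ne mc2 mc])
    qed
  next
    case A0: True
    have Bnz: "B \<noteq> 0"
    proof
      assume "B = 0"
      hence "gc A B x" using A0 unfolding gc_iff by simp
      with nx show False by simp
    qed
    have iB: "\<i> * B \<noteq> 0" using Bnz by simp
    have CiB: "\<i> * B \<in> constructible S" by (intro C_mult C_ii s0 s1 CB)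
    have line_iff: "z \<in> line_through 0 (\<i> * B) \<longleftrightarrow> gc A B z" for z
    proof
      assume "z \<in> line_through 0 (\<i> * B)"
      hence "gc 0 (\<i> * (\<i> * B)) z" by (rule gc0_of_line)
      hence "gc 0 (- B) z" by (simp add: mult.assoc[symmetric])
      thus "gc A B z" using A0 gc0_neg by simp
    next
      assume "gc A B z"
      hence "gc 0 (- B) z" using A0 gc0_neg by simp
      hence "gc 0 (\<i> * (\<i> * B)) z" by (simp add: mult.assoc[symmetric])
      thus "z \<in> line_through 0 (\<i> * B)" by (rule line_of_gc0[OF iB])
    qed
    have ml: "m \<in> line_through 0 (\<i> * B)" using line_iff mB by simp
    show ?thesis
    proof (cases "dlt x y = 0")
      case True
      have "gc 0 (\<i> * dd x y) m" using mG True by (simp add: GA_def GB_def)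
      hence ml2: "m \<in> line_through 0 (dd x y)" by (rule line_of_gc0[OF ddnz])
      have "gc 0 (\<i> * dd x y) x" using xG True by (simp add: GA_def GB_def)
      hence xl: "x \<in> line_through 0 (dd x y)" by (rule line_of_gc0[OF ddnz])
      have ne: "line_through 0 (dd x y) \<noteq> line_through 0 (\<i> * B)"
      proof
        assume eq: "line_through 0 (dd x y) = line_through 0 (\<i> * B)"
        have "x \<in> line_through 0 (\<i> * B)" using xl by (simp only: eq)
        hence "gc A B x" using line_iff by simp
        with nx show False by simp
      qed
      show ?thesis
        by (rule constructible.line_line[OF C_zero[OF s0] Cdd C_zero[OF s0] CiB ddnz[symmetric] iB[symmetric] ne ml2 ml])
    next
      case NC: False
      define c where "c = cen x y"
      have gm: "gc 1 c m" and gx: "gc 1 c x" using mG xG NC unfolding c_def by (simp_all add: GA_def GB_def)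
      have "(cmod (m - c))^2 = (cmod (x - c))^2" using gc1_norm[OF gm] gc1_norm[OF gx] by simp
      hence "cmod (m - c) = cmod (x - c)" by (simp add: power2_eq_iff_nonneg)
      hence mc2: "m \<in> circle_through c x" unfolding circle_through_def by simp
      show ?thesis
        by (rule constructible.line_circle[OF C_zero[OF s0] CiB Ccen[folded c_def] cx iB[symmetric] ml mc2])
    qed
  qed
  thus ?thesis unfolding m_def S_def .
qed

end
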